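(* Let $(p_{ij})_{i,j\in\{0,1\}}$ be a transition matrix with all $p_{ij}\in(0,1)$ and $p_{ij}\ne\tfrac12$ for some $(i,j)$; for $i\in\{0,1\}$ let $I_n^i\sim B(n,p_{i0})$. Define for $n\ge2$ $$\eta_n^{i,1}=\frac1H\Big(n\log n-\mathbb E\big[I_n^i\log I_n^i+(n-I_n^i)\log(n-I_n^i)\big]\Big)+\pi_{1-i}\frac{H_{1-i}-H_i}{H}n+\frac{H_1-H_0}{(p_{01}+p_{10})H}p_{i0}p_{i1}^{n-1}n,$$ and $\eta_n^{i,2}=n-\eta_n^{i,1}$. Then for both $i\in\{0,1\}$, $\eta_n^{i,2}=O(\log n)$ as $n\to\infty$.
   Context: $0\log0:=0$. $\pi_0=p_{10}/(p_{01}+p_{10})$, $\pi_1=p_{01}/(p_{01}+p_{10})$, $H_i=-\sum_jp_{ij}\log p_{ij}$, $H=\pi_0H_0+\pi_1H_1$. *)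

theory Defs
  imports "HOL-Probability.Probability" "HOL-Library.Landau_Symbols"
begin

text \<open>Transition matrix p i j, i,j in {0,1}. Logarithms are natural (base cancels anyway).
  Convention 0 log 0 = 0.\<close>

definition xlogx :: "real \<Rightarrow> real" where
  "xlogx x = (if x = 0 then 0 else x * ln x)"

definition stat_pi :: "(nat \<Rightarrow> nat \<Rightarrow> real) \<Rightarrow> nat \<Rightarrow> real" where
  "stat_pi p i = (if i = 0 then p 1 0 / (p 0 1 + p 1 0) else p 0 1 / (p 0 1 + p 1 0))"

definition row_entropy :: "(nat \<Rightarrow> nat \<Rightarrow> real) \<Rightarrow> nat \<Rightarrow> real" where
  "row_entropy p i = - (\<Sum>j<2. xlogx (p i j))"

definition entropy_rate :: "(nat \<Rightarrow> nat \<Rightarrow> real) \<Rightarrow> real" where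
  "entropy_rate p = stat_pi p 0 * row_entropy p 0 + stat_pi p 1 * row_entropy p 1"

definition eta1 :: "(nat \<Rightarrow> nat \<Rightarrow> real) \<Rightarrow> nat \<Rightarrow> nat \<Rightarrow> real" where
  "eta1 p i n =
     (1 / entropy_rate p) *
       (xlogx (real n) -
        measure_pmf.expectation (binomial_pmf n (p i 0))
          (\<lambda>I. xlogx (real I) + xlogx (real n - real I)))
     + stat_pi p (1 - i) * (row_entropy p (1 - i) - row_entropy p i) / entropy_rate p * real n
     + (row_entropy p 1 - row_entropy p 0) / ((p 0 1 + p 1 0) * entropy_rate p)
         * p i 0 * p i 1 ^ (n - 1) * real n"

definition eta2 :: "(nat \<Rightarrow> nat \<Rightarrow> real) \<Rightarrow> nat \<Rightarrow> nat \<Rightarrow> real" where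
  "eta2 p i n = real n - eta1 p i n"

end

theory Submission
  imports Defs
begin

lemma binom_mean:
  fixes q r :: real assumes "q + r = 1"
  shows "(\<Sum>k\<le>n. real k * (real (n choose k) * q^k * r^(n-k))) = real n * q"
proof (cases n)
  case 0 then show ?thesis by simp
next
  case (Suc m)
  have "(\<Sum>k\<le>Suc m. real k * (real (Suc m choose k) * q^k * r^(Suc m-k)))
      = (\<Sum>j\<le>m. real (Suc j) * (real (Suc m choose Suc j) * q^Suc j * r^(Suc m- Suc j)))"
    by (subst sum.atMost_Suc_shift) simp
  also have "\<dots> = (\<Sum>j\<le>m. (real (Suc m) * q) * (real (m choose j) * q^j * r^(m-j)))"
  proof (rule sum.cong[OF refl])
    fix j
    have "real (Suc j) * real (Suc m choose Suc j) = real (Suc m) * real (m choose j)"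
      by (metis Suc_times_binomial of_nat_mult)
    then have h: "real (Suc j) * real (Suc m choose Suc j) = real (Suc m) * real (m choose j)" .
    have "real (Suc j) * (real (Suc m choose Suc j) * q^Suc j * r^(Suc m- Suc j))
       = (real (Suc j) * real (Suc m choose Suc j)) * (q * q^j * r^(m-j))"
      by (simp only: power_Suc diff_Suc_Suc mult_ac)
    also have "\<dots> = (real (Suc m) * real (m choose j)) * (q * q^j * r^(m-j))" by (simp only: h)
    also have "\<dots> = (real (Suc m) * q) * (real (m choose j) * q^j * r^(m-j))" by (simp only: mult_ac)
    finally show "real (Suc j) * (real (Suc m choose Suc j) * q^Suc j * r^(Suc m- Suc j)) = (real (Suc m) * q) * (real (m choose j) * q^j * r^(m-j))" .
  qed
  also have "\<dots> = real (Suc m) * q * (q + r)^m"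
    by (simp add: binomial_ring sum_distrib_left)
  finally show ?thesis using Suc assms by simp
qed

lemma binom_fact2:
  fixes q r :: real assumes "q + r = 1"
  shows "(\<Sum>k\<le>n. real k * (real k - 1) * (real (n choose k) * q^k * r^(n-k))) = real n * (real n - 1) * q^2"
proof (cases n)
  case 0 then show ?thesis by simp
next
  case (Suc m)
  have "(\<Sum>k\<le>Suc m. real k * (real k - 1) * (real (Suc m choose k) * q^k * r^(Suc m-k)))
      = (\<Sum>j\<le>m. real (Suc j) * (real (Suc j) - 1) * (real (Suc m choose Suc j) * q^Suc j * r^(Suc m- Suc j)))"
    by (subst sum.atMost_Suc_shift) simp
  also have "\<dots> = (\<Sum>j\<le>m. (real (Suc m) * q) * (real j * (real (m choose j) * q^j * r^(m-j))))"
  proof (rule sum.cong[OF refl])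
    fix j
    have "real (Suc j) * real (Suc m choose Suc j) = real (Suc m) * real (m choose j)"
      by (metis Suc_times_binomial of_nat_mult)
    then have h: "real (Suc j) * real (Suc m choose Suc j) = real (Suc m) * real (m choose j)" .
    have "real (Suc j) - 1 = real j" by simp
    have "real (Suc j) * (real (Suc j) - 1) * (real (Suc m choose Suc j) * q^Suc j * r^(Suc m- Suc j))
       = (real (Suc j) * real (Suc m choose Suc j)) * (real j * q * q^j * r^(m-j))"
      by (simp only: power_Suc diff_Suc_Suc mult_ac \<open>real (Suc j) - 1 = real j\<close>)
    also have "\<dots> = (real (Suc m) * real (m choose j)) * (real j * q * q^j * r^(m-j))" by (simp only: h)
    also have "\<dots> = (real (Suc m) * q) * (real j * (real (m choose j) * q^j * r^(m-j)))" by (simp only: mult_ac)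
    finally show "real (Suc j) * (real (Suc j) - 1) * (real (Suc m choose Suc j) * q^Suc j * r^(Suc m- Suc j)) = (real (Suc m) * q) * (real j * (real (m choose j) * q^j * r^(m-j)))" .
  qed
  also have "\<dots> = real (Suc m) * q * (real m * q)"
    by (simp add: binom_mean[OF assms] flip: sum_distrib_left)
  finally show ?thesis using Suc by (simp add: power2_eq_square)
qed

lemma xlogx_bounds:
  fixes a x :: real assumes "a > 0" "x \<ge> 0"
  shows "x * ln a + x - a \<le> xlogx x" "xlogx x \<le> x * ln a + x^2 / a - x"
proof -
  have "x * ln a + x - a \<le> xlogx x \<and> xlogx x \<le> x * ln a + x^2 / a - x"
  proof (cases "x = 0")
    case True then show ?thesis using assms by (simp add: xlogx_def)
  next
    case False
    then have x: "x > 0" using assms by simp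
    have l1: "ln (x/a) \<le> x/a - 1" using ln_le_minus_one[of "x/a"] x assms by simp
    have l2: "ln (a/x) \<le> a/x - 1" using ln_le_minus_one[of "a/x"] x assms by simp
    have e1: "ln (x/a) = ln x - ln a" "ln (a/x) = ln a - ln x" using x assms by (simp_all add: ln_div)
    have "x * ln (a/x) \<le> x * (a/x - 1)" using l2 x by (intro mult_left_mono) auto
    then have A: "x * ln a - x * ln x \<le> a - x" using x e1 by (simp add: algebra_simps)
    have "x * ln (x/a) \<le> x * (x/a - 1)" using l1 x by (intro mult_left_mono) auto
    then have B: "x * ln x - x * ln a \<le> x^2/a - x" using x e1 by (simp add: algebra_simps power2_eq_square)
    show ?thesis using A B False by (simp add: xlogx_def)
  qed
  then show "x * ln a + x - a \<le> xlogx x" "xlogx x \<le> x * ln a + x^2 / a - x" by auto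
qed

lemma sum_quad:
  fixes w :: "nat \<Rightarrow> real"
  shows "(\<Sum>k\<in>A. w k * (c0 + c1 * real k + c2 * real k ^ 2)) = c0 * (\<Sum>k\<in>A. w k) + c1 * (\<Sum>k\<in>A. real k * w k) + c2 * (\<Sum>k\<in>A. real k ^ 2 * w k)"
  by (simp add: sum.distrib sum_distrib_left algebra_simps)



lemma alg1: fixes n q r a b la lb :: real assumes nn: "n > 0" and q: "0<q" "q<1" and r: "r = 1 - q" and a: "a = n*q" and b: "b = n*r"
 shows "(n * lb + n^2 / b - n) + (la - lb - 2 * n / b) * (n * q) + (1/a + 1/b) * (n * (n - 1) * q^2 + n * q) = a * la + b * lb + 1"
proof -
  have r0: "r > 0" using q r by simp
  have e1: "(1/a) * (n * (n - 1) * q^2 + n * q) = (n-1)*q + 1" using nn q a by (simp add: field_simps power2_eq_square)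
  have e2: "(1/b) * (n * (n - 1) * q^2 + n * q) = ((n-1)*q^2 + q)/r" using nn r0 b by (simp add: field_simps power2_eq_square)
  have e3: "n^2/b = n/r" "2*n/b = 2/r" using nn r0 b by (simp_all add: field_simps power2_eq_square)
  have "(n * lb + n^2 / b - n) + (la - lb - 2 * n / b) * (n * q) + (1/a + 1/b) * (n * (n - 1) * q^2 + n * q)
    = n * lb + n/r - n + (la - lb - 2/r) * (n*q) + ((n-1)*q + 1) + ((n-1)*q^2 + q)/r"
    using e1 e2 e3 by (simp add: algebra_simps)
  also have "\<dots> = a * la + b * lb + 1"
  proof -
    have "n/r - n - 2/r*(n*q) + (n-1)*q + ((n-1)*q^2 + q)/r = 0"
    proof -
      have qq: "q = 1 - r" using r by simp
      show ?thesis using r0 unfolding qq by (simp add: field_simps power2_eq_square)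
    qed
    then show ?thesis unfolding a b r by (simp add: algebra_simps)
  qed
  finally show ?thesis .
qed
lemma alg2: fixes n q r a b la lb :: real assumes r: "r = 1 - q" and a: "a = n*q" and b: "b = n*r"
 shows "(n * lb + n - a - b) + (la - lb) * (n*q) + 0 * (n * (n - 1) * q^2 + n * q) = a * la + b * lb"
 unfolding assms by (simp add: algebra_simps)
lemma alg3: fixes n q r  lq lr ln :: real assumes r: "r = 1 - q"
 shows "n*q*(ln + lq) + n*r*(ln+lr) = n * ln + n * (q * lq + r * lr)"
 unfolding assms by (simp add: algebra_simps)

lemma binom_xlogx_bounds:
  fixes q r :: real assumes q: "0 < q" "q < 1" and r: "r = 1 - q" and n: "n \<ge> 1"
  shows "real n * ln (real n) + real n * (q * ln q + r * ln r)
           \<le> measure_pmf.expectation (binomial_pmf n q) (\<lambda>I. xlogx (real I) + xlogx (real n - real I))"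
    and "measure_pmf.expectation (binomial_pmf n q) (\<lambda>I. xlogx (real I) + xlogx (real n - real I))
           \<le> real n * ln (real n) + real n * (q * ln q + r * ln r) + 1"
proof -
  define w where "w k = real (n choose k) * q^k * r^(n-k)" for k
  have rpos: "r > 0" "q + r = 1" using q r by auto
  have E_eq: "measure_pmf.expectation (binomial_pmf n q) (\<lambda>I. xlogx (real I) + xlogx (real n - real I))
      = (\<Sum>k\<le>n. w k * (xlogx (real k) + xlogx (real n - real k)))"
  proof -
    have "measure_pmf.expectation (binomial_pmf n q) (\<lambda>I. xlogx (real I) + xlogx (real n - real I))
      = (\<Sum>k\<le>n. (real (n choose k) * q^k * (1-q)^(n-k)) *\<^sub>R (xlogx (real k) + xlogx (real n - real k)))"
      by (rule expectation_binomial_pmf') (use q in auto)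
    then show ?thesis by (simp add: w_def r)
  qed
  have S0: "(\<Sum>k\<le>n. w k) = 1" using binomial_ring[of q r n] rpos by (simp add: w_def)
  have S1: "(\<Sum>k\<le>n. real k * w k) = real n * q" using binom_mean[OF rpos(2)] by (simp add: w_def)
  have S2: "(\<Sum>k\<le>n. real k ^ 2 * w k) = real n * (real n - 1) * q^2 + real n * q"
  proof -
    have "(\<Sum>k\<le>n. real k ^ 2 * w k) = (\<Sum>k\<le>n. real k * (real k - 1) * w k + real k * w k)"
      by (rule sum.cong) (simp_all add: algebra_simps power2_eq_square)
    also have "\<dots> = real n * (real n - 1) * q^2 + real n * q"
      using binom_fact2[OF rpos(2), of n] binom_mean[OF rpos(2), of n]
      by (simp add: sum.distrib w_def)
    finally show ?thesis .
  qed
  have wnn: "w k \<ge> 0" for k using q rpos by (simp add: w_def)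
  define a where "a = real n * q"
  define b where "b = real n * r"
  have apos: "a > 0" and bpos: "b > 0" using n q rpos by (auto simp: a_def b_def)
  have lna: "ln a = ln (real n) + ln q" and lnb: "ln b = ln (real n) + ln r"
    using n q rpos by (auto simp: a_def b_def ln_mult)
  have key: "a * ln a + b * ln b = real n * ln (real n) + real n * (q * ln q + r * ln r)"
  proof -
    have "a * ln a + b * ln b = real n * q * (ln (real n) + ln q) + real n * r * (ln (real n) + ln r)"
      unfolding lna lnb by (simp add: a_def b_def)
    also have "\<dots> = real n * ln (real n) + real n * (q * ln q + r * ln r)" by (rule alg3[OF r])
    finally show ?thesis .
  qed
  have low: "(n * ln b + n - a - b) + (ln a - ln b) * real k + 0 * real k ^ 2
             \<le> xlogx (real k) + xlogx (real n - real k)" if "k \<le> n" for k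
    using xlogx_bounds(1)[OF apos, of "real k"] xlogx_bounds(1)[OF bpos, of "real n - real k"] that
    by (simp add: algebra_simps)
  have "(\<Sum>k\<le>n. w k * ((n * ln b + n - a - b) + (ln a - ln b) * real k + 0 * real k ^ 2))
        \<le> (\<Sum>k\<le>n. w k * (xlogx (real k) + xlogx (real n - real k)))"
    by (rule sum_mono) (use low wnn in \<open>auto intro: mult_left_mono\<close>)
  moreover have "(\<Sum>k\<le>n. w k * ((n * ln b + n - a - b) + (ln a - ln b) * real k + 0 * real k ^ 2))
        = a * ln a + b * ln b"
    unfolding sum_quad S0 S1 using alg2[OF r a_def b_def, where la="ln a" and lb="ln b"] by simp
  ultimately show "real n * ln (real n) + real n * (q * ln q + r * ln r)
           \<le> measure_pmf.expectation (binomial_pmf n q) (\<lambda>I. xlogx (real I) + xlogx (real n - real I))"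
    using key E_eq by simp
  have up: "xlogx (real k) + xlogx (real n - real k) \<le>
       (n * ln b + n^2 / b - n) + (ln a - ln b - 2 * n / b) * real k + (1/a + 1/b) * real k ^ 2" if "k \<le> n" for k
  proof -
    have "xlogx (real k) + xlogx (real n - real k) \<le> (real k * ln a + (real k)^2 / a - real k)
          + ((real n - real k) * ln b + (real n - real k)^2 / b - (real n - real k))"
      using xlogx_bounds(2)[OF apos, of "real k"] xlogx_bounds(2)[OF bpos, of "real n - real k"] that
      by simp
    also have "\<dots> = (n * ln b + n^2 / b - n) + (ln a - ln b - 2 * n / b) * real k + (1/a + 1/b) * real k ^ 2"
      using apos bpos by (simp add: field_simps power2_eq_square)
    finally show ?thesis .
  qed
  have "(\<Sum>k\<le>n. w k * (xlogx (real k) + xlogx (real n - real k)))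
      \<le> (\<Sum>k\<le>n. w k * ((n * ln b + n^2 / b - n) + (ln a - ln b - 2 * n / b) * real k + (1/a + 1/b) * real k ^ 2))"
    by (rule sum_mono) (use up wnn in \<open>auto intro: mult_left_mono\<close>)
  moreover have "(\<Sum>k\<le>n. w k * ((n * ln b + n^2 / b - n) + (ln a - ln b - 2 * n / b) * real k + (1/a + 1/b) * real k ^ 2))
      = a * ln a + b * ln b + 1"
  proof -
    have "(\<Sum>k\<le>n. w k * ((n * ln b + n^2 / b - n) + (ln a - ln b - 2 * n / b) * real k + (1/a + 1/b) * real k ^ 2))
       = (n * ln b + n^2 / b - n) + (ln a - ln b - 2 * n / b) * (real n * q) + (1/a + 1/b) * (real n * (real n - 1) * q^2 + real n * q)"
      unfolding sum_quad S0 S1 S2 by simp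
    also have "\<dots> = a * ln a + b * ln b + 1"
      using alg1[OF _ q r a_def b_def, where la="ln a" and lb="ln b"] n by simp
    finally show ?thesis .
  qed
  ultimately show "measure_pmf.expectation (binomial_pmf n q) (\<lambda>I. xlogx (real I) + xlogx (real n - real I))
           \<le> real n * ln (real n) + real n * (q * ln q + r * ln r) + 1"
    using key E_eq by simp
qed


lemma alg4:
  fixes H Hi H' c X T n :: real
  assumes "H \<noteq> 0" "H = Hi + c * (H' - Hi)"
  shows "n - ((1/H) * X + c * (H' - Hi) / H * n + T) = -(X - n * Hi) / H - T"
proof -
  have e: "c * (H' - Hi) = H - Hi" using assms(2) by simp
  have "c * (H' - Hi) / H * n = (H - Hi) / H * n" by (simp only: e)
  then show ?thesis using assms(1) by (simp add: field_simps)
qed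

lemma main_i:
  fixes p :: "nat \<Rightarrow> nat \<Rightarrow> real"
  assumes range: "\<And>i j. i < 2 \<Longrightarrow> j < 2 \<Longrightarrow> 0 < p i j \<and> p i j < 1"
    and stoch: "\<And>i. i < 2 \<Longrightarrow> p i 0 + p i 1 = 1"
    and i: "i < 2"
  shows "(\<lambda>n. eta2 p i n) \<in> O(\<lambda>n. ln (real n))"
proof -
  define q where "q = p i 0"
  define r where "r = p i 1"
  have q: "0 < q" "q < 1" using range[OF i, of 0] by (auto simp: q_def)
  have rr: "r = 1 - q" using stoch[OF i] by (simp add: q_def r_def)
  have r0: "0 < r" "r < 1" using q rr by auto
  have rowE: "row_entropy p j = -(p j 0 * ln (p j 0) + p j 1 * ln (p j 1))" if "j < 2" for j
  proof -
    have "p j 0 \<noteq> 0" "p j 1 \<noteq> 0" using range[OF that, of 0] range[OF that, of 1] by auto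
    then show ?thesis by (simp add: row_entropy_def xlogx_def numeral_2_eq_2 lessThan_Suc)
  qed
  have rowpos: "row_entropy p j > 0" if "j < 2" for j
  proof -
    have a: "0 < p j 0" "p j 0 < 1" "0 < p j 1" "p j 1 < 1" using range[OF that, of 0] range[OF that, of 1] by auto
    have "p j 0 * ln (p j 0) < 0" using a by (intro mult_pos_neg) auto
    moreover have "p j 1 * ln (p j 1) < 0" using a by (intro mult_pos_neg) auto
    ultimately show ?thesis using rowE[OF that] by simp
  qed
  have ssum: "p 0 1 + p 1 0 > 0" using range[of 0 1] range[of 1 0] by auto
  have pi0: "stat_pi p 0 > 0" "stat_pi p 1 > 0" using ssum range[of 0 1] range[of 1 0]
    by (auto simp: stat_pi_def)
  define H where "H = entropy_rate p"
  have Hpos: "H > 0" unfolding H_def entropy_rate_def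
    using pi0 rowpos[of 0] rowpos[of 1] by (intro add_pos_pos mult_pos_pos) auto
  have Hid: "H = row_entropy p i + stat_pi p (1 - i) * (row_entropy p (1 - i) - row_entropy p i)"
  proof -
    have "stat_pi p 0 + stat_pi p 1 = (p 1 0 + p 0 1) / (p 0 1 + p 1 0)"
      by (simp add: stat_pi_def add_divide_distrib)
    also have "\<dots> = 1" using ssum by (simp add: add.commute)
    finally have s: "stat_pi p 0 + stat_pi p 1 = 1" .
    have "i = 0 \<or> i = 1" using i by auto
    then show ?thesis
    proof
      assume ii: "i = 0"
      have e: "stat_pi p 0 = 1 - stat_pi p 1" using s by simp
      show ?thesis unfolding H_def entropy_rate_def ii e by (simp add: algebra_simps)
    next
      assume ii: "i = 1"
      have e: "stat_pi p 1 = 1 - stat_pi p 0" using s by simp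
      show ?thesis unfolding H_def entropy_rate_def ii e by (simp add: algebra_simps)
    qed
  qed
  define Hi where "Hi = row_entropy p i"
  have Hi: "Hi = -(q * ln q + r * ln r)" using rowE[OF i] by (simp add: Hi_def q_def r_def)
  define Cc where "Cc = (row_entropy p 1 - row_entropy p 0) / ((p 0 1 + p 1 0) * H)"
  define E where "E n = measure_pmf.expectation (binomial_pmf n q) (\<lambda>I. xlogx (real I) + xlogx (real n - real I))" for n
  have eta2_eq: "eta2 p i n = -(xlogx (real n) - E n - real n * Hi) / H - Cc * q * r ^ (n - 1) * real n" for n
  proof -
    have "eta2 p i n = real n - ((1/H) * (xlogx (real n) - E n) + stat_pi p (1 - i) * (row_entropy p (1 - i) - Hi) / H * real n
        + Cc * q * r ^ (n - 1) * real n)"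
      unfolding eta2_def eta1_def E_def H_def Cc_def q_def r_def Hi_def by (simp add: mult.assoc)
    also have "\<dots> = -(xlogx (real n) - E n - real n * Hi) / H - Cc * q * r ^ (n - 1) * real n"
      by (rule alg4) (use Hpos Hid Hi_def in auto)
    finally show ?thesis .
  qed
  have Ebnd: "\<bar>xlogx (real n) - E n - real n * Hi\<bar> \<le> 1" if "n \<ge> 1" for n
  proof -
    have x: "xlogx (real n) = real n * ln (real n)" using that by (simp add: xlogx_def)
    show ?thesis using binom_xlogx_bounds[OF q rr that] unfolding x E_def Hi by (simp add: algebra_simps abs_le_iff)
  qed
  have "(\<lambda>n. of_nat n * r ^ n) \<longlonglongrightarrow> 0" using r0 by (intro powser_times_n_limit_0) auto
  then have "Bseq (\<lambda>n. of_nat n * r ^ n)" by (intro convergent_imp_Bseq convergentI)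
  then obtain K where K: "K > 0" "\<And>n. norm (of_nat n * r ^ n) \<le> K" by (auto simp: Bseq_def)
  have powbnd: "real n * r ^ (n - 1) \<le> K / r" if "n \<ge> 1" for n
  proof -
    have "r ^ n = r * r ^ (n - 1)" using that by (metis Suc_diff_1 less_le_trans power_Suc zero_less_one)
    then have "real n * r ^ (n - 1) * r \<le> K" using K(2)[of n] r0 by (simp add: abs_mult mult_ac)
    then show ?thesis using r0 by (simp add: field_simps)
  qed
  define M where "M = 1 / H + \<bar>Cc\<bar> * q * (K / r)"
  have bnd: "\<bar>eta2 p i n\<bar> \<le> M" if "n \<ge> 1" for n
  proof -
    have "\<bar>eta2 p i n\<bar> \<le> \<bar>xlogx (real n) - E n - real n * Hi\<bar> / H + \<bar>Cc\<bar> * q * (real n * r ^ (n - 1))"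
    proof -
      have "\<bar>eta2 p i n\<bar> \<le> \<bar>-(xlogx (real n) - E n - real n * Hi) / H\<bar> + \<bar>Cc * q * r ^ (n - 1) * real n\<bar>"
        unfolding eta2_eq by (rule abs_triangle_ineq4)
      also have "\<bar>-(xlogx (real n) - E n - real n * Hi) / H\<bar> = \<bar>xlogx (real n) - E n - real n * Hi\<bar> / H"
        using Hpos by (simp add: abs_divide)
      also have "\<bar>Cc * q * r ^ (n - 1) * real n\<bar> = \<bar>Cc\<bar> * q * (real n * r ^ (n - 1))"
        using q r0 by (simp add: abs_mult)
      finally show ?thesis .
    qed
    also have "\<dots> \<le> 1 / H + \<bar>Cc\<bar> * q * (K / r)"
      using Ebnd[OF that] powbnd[OF that] Hpos q
      by (intro add_mono divide_right_mono mult_left_mono) auto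
    finally show ?thesis unfolding M_def .
  qed
  have lnt: "filterlim (\<lambda>n. ln (real n)) at_top sequentially"
    by (rule filterlim_compose[OF ln_at_top filterlim_real_sequentially])
  have ev: "eventually (\<lambda>n. 1 \<le> ln (real n)) sequentially"
    using lnt by (simp add: filterlim_at_top)
  have ev2: "eventually (\<lambda>n. norm (eta2 p i n) \<le> M * norm (ln (real n))) sequentially"
    using ev eventually_ge_at_top[of 1]
  proof eventually_elim
    case (elim n)
    have "M \<ge> 0" using bnd[of 1] by linarith
    then have "M * 1 \<le> M * \<bar>ln (real n)\<bar>" using elim by (intro mult_left_mono) auto
    then show ?case using bnd[OF elim(2)] by simp
  qed
  then show ?thesis by (rule bigoI)
qed


theorem lemma6p5:
  fixes p :: "nat \<Rightarrow> nat \<Rightarrow> real"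
  assumes range: "\<And>i j. i < 2 \<Longrightarrow> j < 2 \<Longrightarrow> 0 < p i j \<and> p i j < 1"
    and stoch: "\<And>i. i < 2 \<Longrightarrow> p i 0 + p i 1 = 1"
    and nonuniform: "\<exists>i<2. \<exists>j<2. p i j \<noteq> 1/2"
  shows "\<forall>i<2. (\<lambda>n. eta2 p i n) \<in> O(\<lambda>n. ln (real n))"
proof (intro allI impI)
  fix i :: nat assume "i < 2"
  show "(\<lambda>n. eta2 p i n) \<in> O(\<lambda>n. ln (real n))"
    by (rule main_i[where p=p and i=i]) (use range stoch \<open>i < 2\<close> in auto)
qed

end
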